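(* Let $\boldsymbol{\sigma}=(\sigma_n\colon\mathcal{A}_{n+1}^+\to\mathcal{A}_n^+)_{n\in\mathbb{N}}$ and $\boldsymbol{\tau}=(\tau_n\colon\mathcal{B}_{n+1}^+\to\mathcal{B}_n^+)_{n\in\mathbb{N}}$ be everywhere growing and proper directive sequences and let $\boldsymbol{\phi}=(\phi_n)_{n\in\mathbb{N}}\colon\boldsymbol{\sigma}\to\boldsymbol{\tau}$ be a letter-onto factor. Then $X_{\boldsymbol{\tau}}=\bigcup_{k\in\mathbb{Z}}T^k\phi_0(X^{(1)}_{\boldsymbol{\sigma}})$ and $X^{(n)}_{\boldsymbol{\tau}}=\bigcup_{k\in\mathbb{Z}}T^k\phi_n(X^{(n)}_{\boldsymbol{\sigma}})$ for every $n\ge1$.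
   Context: An alphabet is a finite set; $\mathcal{A}^+$ is the set of nonempty finite words. A morphism $\sigma\colon\mathcal{A}^+\to\mathcal{B}^+$ is a semigroup homomorphism, extended to $\mathcal{A}^{\mathbb{Z}}\to\mathcal{B}^{\mathbb{Z}}$ by concatenation, $\sigma(x)=\cdots\sigma(x_{-1}).\sigma(x_0)\sigma(x_1)\cdots$ with $\sigma(x_0)$ starting at coordinate $0$; $T$ is the shift. $\sigma$ is proper if there are letters $u,v$ such that every $\sigma(a)$ starts with $u$ and ends with $v$; letter-onto if every $b\in\mathcal{B}$ occurs in some $\sigma(a)$. For a directive sequence $\boldsymbol{\sigma}=(\sigma_n\colon\mathcal{A}_{n+1}^+\to\mathcal{A}_n^+)$, $\sigma_{[n,N)}=\sigma_n\circ\cdots\circ\sigma_{N-1}$, its $n$th level is $X^{(n)}_{\boldsymbol{\sigma}}=\{x\in\mathcal{A}_n^{\mathbb{Z}}:\forall\ell,\ x_{[-\ell,\ell]}$ occurs in $\sigma_{[n,N)}(a)$ for some $N>n,a\in\mathcal{A}_N\}$, and $X_{\boldsymbol{\sigma}}=X^{(0)}_{\boldsymbol{\sigma}}$. It is everywhere growing if $\min_{a\in\mathcal{A}_N}|\sigma_{[0,N)}(a)|\to\infty$; proper if each $\sigma_n$ is proper. A factor $\boldsymbol{\phi}\colon\boldsymbol{\sigma}\to\boldsymbol{\tau}$ is a sequence of morphisms $\phi_0\colon\mathcal{A}_1^+\to\mathcal{B}_0^+$, $\phi_n\colon\mathcal{A}_n^+\to\mathcal{B}_n^+$ ($n\ge1$)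 with $\phi_0=\tau_0\phi_1$ and $\phi_n\sigma_n=\tau_n\phi_{n+1}$ for $n\ge1$; it is letter-onto if each $\phi_n$ is. *)

theory Defs
  imports Main "HOL-Library.Sublist"
begin

text \<open>Letters of the alphabets A_n live in a common type; an alphabet is a finite
nonempty set. A morphism is given by its letter images (nonempty lists).
Bi-infinite sequences are functions int => letter.\<close>

definition wmorph :: "('a \<Rightarrow> 'b list) \<Rightarrow> 'a list \<Rightarrow> 'b list" where
  "wmorph f w = concat (map f w)"

text \<open>dcomp s n k = s_[n, n+k) = s_n o ... o s_(n+k-1) acting on words.\<close>
fun dcomp :: "(nat \<Rightarrow> 'a \<Rightarrow> 'a list) \<Rightarrow> nat \<Rightarrow> nat \<Rightarrow> 'a list \<Rightarrow> 'a list" where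
  "dcomp s n 0 = id"
| "dcomp s n (Suc k) = wmorph (s n) \<circ> dcomp s (Suc n) k"

definition is_morphism :: "'a set \<Rightarrow> 'b set \<Rightarrow> ('a \<Rightarrow> 'b list) \<Rightarrow> bool" where
  "is_morphism A B f \<longleftrightarrow> (\<forall>a\<in>A. f a \<noteq> [] \<and> set (f a) \<subseteq> B)"

definition proper_morph :: "'a set \<Rightarrow> 'b set \<Rightarrow> ('a \<Rightarrow> 'b list) \<Rightarrow> bool" where
  "proper_morph A B f \<longleftrightarrow> (\<exists>u\<in>B. \<exists>v\<in>B. \<forall>a\<in>A. hd (f a) = u \<and> last (f a) = v)"

definition letter_onto :: "'a set \<Rightarrow> 'b set \<Rightarrow> ('a \<Rightarrow> 'b list) \<Rightarrow> bool" where
  "letter_onto A B f \<longleftrightarrow> (\<forall>b\<in>B. \<exists>a\<in>A. b \<in> set (f a))"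

definition directive_seq :: "(nat \<Rightarrow> 'a set) \<Rightarrow> (nat \<Rightarrow> 'a \<Rightarrow> 'a list) \<Rightarrow> bool" where
  "directive_seq A s \<longleftrightarrow> (\<forall>n. finite (A n) \<and> A n \<noteq> {} \<and> is_morphism (A (Suc n)) (A n) (s n))"

definition everywhere_growing :: "(nat \<Rightarrow> 'a set) \<Rightarrow> (nat \<Rightarrow> 'a \<Rightarrow> 'a list) \<Rightarrow> bool" where
  "everywhere_growing A s \<longleftrightarrow>
     (\<forall>M. \<exists>N0. \<forall>N\<ge>N0. \<forall>a\<in>A N. M \<le> length (dcomp s 0 N [a]))"

definition proper_seq :: "(nat \<Rightarrow> 'a set) \<Rightarrow> (nat \<Rightarrow> 'a \<Rightarrow> 'a list) \<Rightarrow> bool" where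
  "proper_seq A s \<longleftrightarrow> (\<forall>n. proper_morph (A (Suc n)) (A n) (s n))"

definition window :: "(int \<Rightarrow> 'a) \<Rightarrow> nat \<Rightarrow> 'a list" where
  "window x l = map (\<lambda>i. x (int i - int l)) [0..<2*l+1]"

definition level :: "(nat \<Rightarrow> 'a set) \<Rightarrow> (nat \<Rightarrow> 'a \<Rightarrow> 'a list) \<Rightarrow> nat \<Rightarrow> (int \<Rightarrow> 'a) set" where
  "level A s n = {x. (\<forall>i. x i \<in> A n) \<and>
     (\<forall>l. \<exists>N>n. \<exists>a\<in>A N. sublist (window x l) (dcomp s n (N - n) [a]))}"

text \<open>Starting coordinate of the image of x_i under f extended to bi-infinite sequences
(f(x_0) starts at coordinate 0).\<close>
definition start_pos :: "('a \<Rightarrow> 'b list) \<Rightarrow> (int \<Rightarrow> 'a) \<Rightarrow> int \<Rightarrow> int" where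
  "start_pos f x i = (if 0 \<le> i then (\<Sum>j\<in>{0..<i}. int (length (f (x j))))
                      else - (\<Sum>j\<in>{i..<0}. int (length (f (x j)))))"

text \<open>Extension of a morphism (with nonempty images) to bi-infinite sequences:
 f(x) = ... f(x_-1).f(x_0) f(x_1) ...\<close>
definition ext_morph :: "('a \<Rightarrow> 'b list) \<Rightarrow> (int \<Rightarrow> 'a) \<Rightarrow> (int \<Rightarrow> 'b)" where
  "ext_morph f x = (\<lambda>p. THE c. \<exists>i. \<exists>k. k < length (f (x i)) \<and>
       p = start_pos f x i + int k \<and> c = f (x i) ! k)"

definition shiftk :: "int \<Rightarrow> (int \<Rightarrow> 'a) \<Rightarrow> (int \<Rightarrow> 'a)" where
  "shiftk k x = (\<lambda>i. x (i + k))"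

definition is_factor :: "(nat \<Rightarrow> 'a set) \<Rightarrow> (nat \<Rightarrow> 'a \<Rightarrow> 'a list) \<Rightarrow>
    (nat \<Rightarrow> 'b set) \<Rightarrow> (nat \<Rightarrow> 'b \<Rightarrow> 'b list) \<Rightarrow> (nat \<Rightarrow> 'a \<Rightarrow> 'b list) \<Rightarrow> bool" where
  "is_factor A s B t phi \<longleftrightarrow>
     is_morphism (A 1) (B 0) (phi 0) \<and>
     (\<forall>n\<ge>1. is_morphism (A n) (B n) (phi n)) \<and>
     (\<forall>a\<in>A 1. phi 0 a = wmorph (t 0) (phi 1 a)) \<and>
     (\<forall>n\<ge>1. \<forall>a\<in>A (Suc n). wmorph (phi n) (s n a) = wmorph (t n) (phi (Suc n) a))"

definition letter_onto_factor :: "(nat \<Rightarrow> 'a set) \<Rightarrow> (nat \<Rightarrow> 'b set) \<Rightarrow> (nat \<Rightarrow> 'a \<Rightarrow> 'b list) \<Rightarrow> bool" where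
  "letter_onto_factor A B phi \<longleftrightarrow>
     letter_onto (A 1) (B 0) (phi 0) \<and> (\<forall>n\<ge>1. letter_onto (A n) (B n) (phi n))"

end

theory Submission
  imports Defs
begin

lemma sublist_trans: "sublist a b \<Longrightarrow> sublist b c \<Longrightarrow> sublist a c"
  unfolding sublist_def by (metis append.assoc)

lemma mem_sublist: "b \<in> set w \<Longrightarrow> sublist [b] w"
proof -
  assume "b \<in> set w"
  then obtain xs ys where "w = xs @ b # ys" using split_list by fastforce
  then show ?thesis unfolding sublist_def by (intro exI[of _ xs] exI[of _ ys]) simp
qed
lemma sublist_take_drop: "sublist (take n (drop k w)) w"
proof -
  have "w = take k w @ (take n (drop k w) @ drop n (drop k w))" by (simp only: append_take_drop_id)
  then show ?thesis unfolding sublist_def by blast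
qed
lemma sublist_Cons2: "sublist a w \<Longrightarrow> sublist a (c # w)"
  by (simp add: sublist_Cons_right)

lemma wmorph_Nil[simp]: "wmorph f [] = []" by (simp add: wmorph_def)
lemma wmorph_Cons[simp]: "wmorph f (a # w) = f a @ wmorph f w" by (simp add: wmorph_def)
lemma wmorph_append[simp]: "wmorph f (u @ w) = wmorph f u @ wmorph f w" by (simp add: wmorph_def)
lemma wmorph_comp: "wmorph g (wmorph f w) = wmorph (\<lambda>c. wmorph g (f c)) w"
  by (induction w) auto
lemma wmorph_cong: "(\<And>c. c \<in> set w \<Longrightarrow> f c = g c) \<Longrightarrow> wmorph f w = wmorph g w"
  by (induction w) auto
lemma set_wmorph: "set (wmorph f w) = (\<Union>c\<in>set w. set (f c))"
  by (induction w) auto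
lemma sublist_wmorph: "sublist u w \<Longrightarrow> sublist (wmorph f u) (wmorph f w)"
  by (auto simp: sublist_def) blast
lemma length_wmorph_le:
  "(\<And>c. c \<in> set w \<Longrightarrow> length (f c) \<le> C) \<Longrightarrow> length (wmorph f w) \<le> C * length w"
  by (induction w) (auto simp: add_mono)
lemma length_wmorph_ge:
  "(\<And>c. c \<in> set w \<Longrightarrow> f c \<noteq> []) \<Longrightarrow> length w \<le> length (wmorph f w)"
proof (induction w)
  case (Cons a w) then show ?case by (cases "f a") auto
qed auto

lemma dcomp_append: "dcomp s n k (u @ w) = dcomp s n k u @ dcomp s n k w"
  by (induction k arbitrary: n) auto
lemma dcomp_Nil[simp]: "dcomp s n k [] = []"
  by (induction k arbitrary: n) auto
lemma dcomp_wmorph: "dcomp s n k w = wmorph (\<lambda>c. dcomp s n k [c]) w"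
proof (induction w)
  case (Cons a w)
  have "dcomp s n k (a # w) = dcomp s n k [a] @ dcomp s n k w"
    using dcomp_append[of s n k "[a]" w] by simp
  then show ?case using Cons by simp
qed simp
lemma dcomp_add: "dcomp s n (k + j) w = dcomp s n k (dcomp s (n+k) j w)"
  by (induction k arbitrary: n w) auto
lemma dcomp_Suc_right: "dcomp s n (Suc k) w = dcomp s n k (wmorph (s (n+k)) w)"
  using dcomp_add[of s n k 1 w] by simp
lemma dcomp_sublist: "sublist u w \<Longrightarrow> sublist (dcomp s n k u) (dcomp s n k w)"
  by (auto simp: sublist_def dcomp_append) blast
lemma dcomp_set:
  assumes "directive_seq A s"
  shows "set w \<subseteq> A (n+k) \<Longrightarrow> set (dcomp s n k w) \<subseteq> A n"
proof (induction k arbitrary: n w)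
  case 0 then show ?case by simp
next
  case (Suc k)
  have "set (dcomp s (Suc n) k w) \<subseteq> A (Suc n)" using Suc by simp
  then show ?case using assms
    by (auto simp: set_wmorph directive_seq_def is_morphism_def)
qed
lemma dcomp_nonempty:
  assumes "directive_seq A s"
  shows "set w \<subseteq> A (n+k) \<Longrightarrow> length w \<le> length (dcomp s n k w)"
proof (induction k arbitrary: n w)
  case 0 then show ?case by simp
next
  case (Suc k)
  have 1: "set (dcomp s (Suc n) k w) \<subseteq> A (Suc n)" using Suc dcomp_set[OF assms, of w "Suc n" k] by simp
  have "length w \<le> length (dcomp s (Suc n) k w)" using Suc by simp
  also have "\<dots> \<le> length (wmorph (s n) (dcomp s (Suc n) k w))"
    apply (rule length_wmorph_ge) using 1 assms by (auto simp: directive_seq_def is_morphism_def)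
  finally show ?case by simp
qed

lemma start_pos_0[simp]: "start_pos f x 0 = 0"
  by (simp add: start_pos_def)

lemma start_pos_Suc: "start_pos f x (i + 1) = start_pos f x i + int (length (f (x i)))"
proof (cases "0 \<le> i")
  case True
  have "{0..<i+1} = insert i {0..<i}" using True by auto
  then show ?thesis using True by (simp add: start_pos_def)
next
  case False
  show ?thesis
  proof (cases "i + 1 = 0")
    case True
    then have "i = -1" by simp
    have "{-1..<0::int} = {-1}" by auto
    then show ?thesis using True \<open>i = -1\<close> by (simp add: start_pos_def)
  next
    case F2: False
    have "{i..<0} = insert i {i+1..<0}" using False F2 by auto
    then show ?thesis using False F2 by (simp add: start_pos_def)
  qed
qed

lemma start_pos_mono_aux:
  assumes NE: "\<forall>i. f (x i) \<noteq> []"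
  shows "start_pos f x i + int n \<le> start_pos f x (i + int n)"
proof (induction n)
  case (Suc n)
  have e: "i + int (Suc n) = (i + int n) + 1" by simp
  have "start_pos f x (i + int (Suc n)) = start_pos f x (i + int n) + int (length (f (x (i + int n))))"
    unfolding e by (rule start_pos_Suc)
  moreover have "length (f (x (i + int n))) \<ge> 1" using NE by (simp add: Suc_le_eq)
  ultimately show ?case using Suc by simp
qed simp

lemma start_pos_mono:
  assumes NE: "\<forall>i. f (x i) \<noteq> []" and "i \<le> j"
  shows "start_pos f x i + (j - i) \<le> start_pos f x j"
  using start_pos_mono_aux[of f x i "nat (j - i)", OF NE] assms(2) by simp

lemma start_pos_ge: "\<forall>i. f (x i) \<noteq> [] \<Longrightarrow> 0 \<le> i \<Longrightarrow> i \<le> start_pos f x i"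
  using start_pos_mono[of f x 0 i] by simp
lemma start_pos_le: "\<forall>i. f (x i) \<noteq> [] \<Longrightarrow> i \<le> 0 \<Longrightarrow> start_pos f x i \<le> i"
  using start_pos_mono[of f x i 0] by simp

lemma block_unique:
  assumes NE: "\<forall>i. f (x i) \<noteq> []"
    and "k < length (f (x i))" "k' < length (f (x i'))"
    and "start_pos f x i + int k = start_pos f x i' + int k'"
  shows "i = i' \<and> k = k'"
proof -
  have "\<not> i < i'" if "k < length (f (x i))" "start_pos f x i + int k = start_pos f x i' + int k'" for i i' k k'
  proof
    assume "i < i'"
    then have "start_pos f x (i+1) \<le> start_pos f x i'" using start_pos_mono[of f x "i+1" i', OF NE] by simp
    then show False using that start_pos_Suc[of f x i] by simp
  qed
  then have "i = i'" using assms by (metis linorder_neqE_linordered_idom)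
  then show ?thesis using assms by simp
qed

lemma ext_morph_at:
  assumes NE: "\<forall>i. f (x i) \<noteq> []" and "k < length (f (x i))"
  shows "ext_morph f x (start_pos f x i + int k) = f (x i) ! k"
  unfolding ext_morph_def
proof (rule the_equality)
  show "\<exists>i' k'. k' < length (f (x i')) \<and> start_pos f x i + int k = start_pos f x i' + int k' \<and> f (x i) ! k = f (x i') ! k'"
    using assms by blast
next
  fix c assume "\<exists>i' k'. k' < length (f (x i')) \<and> start_pos f x i + int k = start_pos f x i' + int k' \<and> c = f (x i') ! k'"
  then obtain i' k' where "k' < length (f (x i'))" "start_pos f x i + int k = start_pos f x i' + int k'" "c = f (x i') ! k'"
    by blast
  then show "c = f (x i) ! k" using block_unique[of f x, OF NE assms(2)] by metis
qed

lemma block_exists_aux: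
  "start_pos f x a \<le> p \<Longrightarrow> p < start_pos f x (a + int n) \<Longrightarrow>
    \<exists>i. a \<le> i \<and> i < a + int n \<and> start_pos f x i \<le> p \<and> p < start_pos f x (i+1)"
proof (induction n)
  case 0 then show ?case by simp
next
  case (Suc n)
  show ?case
  proof (cases "p < start_pos f x (a + int n)")
    case True then show ?thesis using Suc by fastforce
  next
    case False
    have e: "a + int (Suc n) = (a + int n) + 1" by simp
    then show ?thesis using Suc.prems False by (intro exI[of _ "a + int n"]) (simp only:, simp)
  qed
qed

lemma block_exists:
  assumes NE: "\<forall>i. f (x i) \<noteq> []"
  shows "\<exists>i k. k < length (f (x i)) \<and> p = start_pos f x i + int k \<and> (0 \<le> p \<longrightarrow> i \<le> p) \<and> (p \<le> 0 \<longrightarrow> p \<le> i)"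
proof -
  define a where "a = - \<bar>p\<bar> - 1"
  have "start_pos f x a \<le> a" using start_pos_le[of f x a, OF NE] unfolding a_def by simp
  then have 1: "start_pos f x a \<le> p" unfolding a_def by linarith
  have 2: "p < start_pos f x (a + int (nat (2*\<bar>p\<bar>+2)))"
    using start_pos_ge[of f x "\<bar>p\<bar>+1", OF NE] unfolding a_def by simp
  obtain i where i: "start_pos f x i \<le> p" "p < start_pos f x (i+1)"
    using block_exists_aux[OF 1 2] by blast
  define k where "k = nat (p - start_pos f x i)"
  have "k < length (f (x i))" "p = start_pos f x i + int k"
    using i start_pos_Suc[of f x i] unfolding k_def by auto
  moreover have "0 \<le> p \<longrightarrow> i \<le> p"
  proof
    assume "0 \<le> p"
    show "i \<le> p"
    proof (cases "0 \<le> i")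
      case True then show ?thesis using start_pos_ge[of f x, OF NE True] i by simp
    next
      case False then show ?thesis using \<open>0 \<le> p\<close> by simp
    qed
  qed
  moreover have "p \<le> 0 \<longrightarrow> p \<le> i"
  proof
    assume "p \<le> 0"
    show "p \<le> i"
    proof (cases "i + 1 \<le> 0")
      case True then show ?thesis using start_pos_le[of f x, OF NE True] i by simp
    next
      case False then show ?thesis using \<open>p \<le> 0\<close> by simp
    qed
  qed
  ultimately show ?thesis by blast
qed

lemma start_pos_cong:
  assumes "\<And>j. \<bar>j\<bar> \<le> \<bar>i\<bar> \<Longrightarrow> x j = x' j"
  shows "start_pos f x i = start_pos f x' i"
  unfolding start_pos_def using assms by (auto intro!: sum.cong)

lemma ext_morph_local:
  assumes NE: "\<forall>i. f (x i) \<noteq> []" and NE': "\<forall>i. f (x' i) \<noteq> []"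
    and agree: "\<And>j. \<bar>j\<bar> \<le> r \<Longrightarrow> x j = x' j" and "\<bar>p\<bar> \<le> r"
  shows "ext_morph f x p = ext_morph f x' p"
proof -
  obtain i k where ik: "k < length (f (x i))" "p = start_pos f x i + int k"
    "0 \<le> p \<longrightarrow> i \<le> p" "p \<le> 0 \<longrightarrow> p \<le> i"
    using block_exists[of f x, OF NE] by blast
  have "\<bar>i\<bar> \<le> r"
  proof (cases "0 \<le> i")
    case True then have "i \<le> p" using start_pos_ge[of f x, OF NE True] ik by simp
    then show ?thesis using True assms(4) by simp
  next
    case False
    have "p < start_pos f x (i+1)" using ik start_pos_Suc[of f x i] by simp
    moreover have "start_pos f x (i+1) \<le> i + 1" using start_pos_le[of f x "i+1", OF NE] False by simp
    ultimately show ?thesis using False assms(4) by simp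
  qed
  then have eq: "start_pos f x i = start_pos f x' i" and xi: "x i = x' i"
    using agree by (auto intro!: start_pos_cong)
  have "ext_morph f x p = f (x i) ! k" using ext_morph_at[of f x, OF NE ik(1)] ik(2) by simp
  also have "\<dots> = ext_morph f x' p" using ext_morph_at[of f x' k i, OF NE'] ik xi eq by simp
  finally show ?thesis .
qed

lemma ext_morph_in:
  assumes NE: "\<forall>i. f (x i) \<noteq> []"
  shows "\<exists>i. ext_morph f x p \<in> set (f (x i))"
proof -
  obtain i k where ik: "k < length (f (x i))" "p = start_pos f x i + int k"
    using block_exists[of f x, OF NE] by blast
  then show ?thesis using ext_morph_at[of f x, OF NE ik(1)] nth_mem by metis
qed

definition slice :: "(int \<Rightarrow> 'a) \<Rightarrow> int \<Rightarrow> nat \<Rightarrow> 'a list" where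
  "slice x a n = map (\<lambda>j. x (a + int j)) [0..<n]"

lemma ext_morph_slice:
  assumes NE: "\<forall>i. f (x i) \<noteq> []"
  shows "start_pos f x (a + int n) = start_pos f x a + int (length (wmorph f (slice x a n))) \<and>
    (\<forall>q < length (wmorph f (slice x a n)). ext_morph f x (start_pos f x a + int q) = wmorph f (slice x a n) ! q)"
proof (induction n)
  case 0 then show ?case by (simp add: slice_def)
next
  case (Suc n)
  have sl: "slice x a (Suc n) = slice x a n @ [x (a + int n)]" by (simp add: slice_def)
  have e: "a + int (Suc n) = (a + int n) + 1" by simp
  have sp: "start_pos f x (a + int (Suc n)) = start_pos f x (a + int n) + int (length (f (x (a + int n))))"
    unfolding e by (rule start_pos_Suc)
  show ?case
  proof
    show "start_pos f x (a + int (Suc n)) = start_pos f x a + int (length (wmorph f (slice x a (Suc n))))"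
      using sp Suc sl by simp
    show "\<forall>q<length (wmorph f (slice x a (Suc n))). ext_morph f x (start_pos f x a + int q) = wmorph f (slice x a (Suc n)) ! q"
    proof (intro allI impI)
      fix q assume q: "q < length (wmorph f (slice x a (Suc n)))"
      show "ext_morph f x (start_pos f x a + int q) = wmorph f (slice x a (Suc n)) ! q"
      proof (cases "q < length (wmorph f (slice x a n))")
        case True then show ?thesis using Suc sl by (simp add: nth_append)
      next
        case False
        define k where "k = q - length (wmorph f (slice x a n))"
        have k: "k < length (f (x (a + int n)))" using q False sl unfolding k_def by simp
        have "start_pos f x a + int q = start_pos f x (a + int n) + int k"
          using Suc False unfolding k_def by simp
        then have "ext_morph f x (start_pos f x a + int q) = f (x (a + int n)) ! k"
          using ext_morph_at[of f x, OF NE k] by simp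
        then show ?thesis using sl False unfolding k_def by (simp add: nth_append)
      qed
    qed
  qed
qed

lemma split_pos:
  "q < length (wmorph f v) \<Longrightarrow> \<exists>v1 c v2 k. v = v1 @ c # v2 \<and> q = length (wmorph f v1) + k \<and> k < length (f c)"
proof (induction v arbitrary: q)
  case Nil then show ?case by simp
next
  case (Cons a v)
  show ?case
  proof (cases "q < length (f a)")
    case True then show ?thesis by (intro exI[of _ "[]"] exI[of _ a] exI[of _ v] exI[of _ q]) simp
  next
    case False
    then have "q - length (f a) < length (wmorph f v)" using Cons.prems by simp
    then obtain v1 c v2 k where "v = v1 @ c # v2" "q - length (f a) = length (wmorph f v1) + k" "k < length (f c)"
      using Cons.IH by blast
    then show ?thesis using False by (intro exI[of _ "a # v1"] exI[of _ c] exI[of _ v2] exI[of _ k]) auto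
  qed
qed

lemma window_nth: "i < 2*l+1 \<Longrightarrow> window y l ! i = y (int i - int l)"
  unfolding window_def by (simp del: upt_Suc)
lemma length_window[simp]: "length (window y l) = 2*l+1"
  by (simp add: window_def)

lemma local_preimage:
  fixes \<psi> :: "'a \<Rightarrow> 'b list"
  assumes NE: "\<forall>c\<in>Am. \<psi> c \<noteq> []" and K: "\<forall>c\<in>Am. length (\<psi> c) \<le> K" and a0: "a0 \<in> Am"
    and v: "set v \<subseteq> Am" and W: "sublist (window y l) (wmorph \<psi> v)"
  shows "\<exists>z k. (\<forall>j. z j \<in> Am) \<and> k < K \<and> (\<forall>p. \<bar>p\<bar> \<le> int l \<longrightarrow> y p = ext_morph \<psi> z (p + int k))
     \<and> (\<forall>r. K*(r+1) \<le> l \<longrightarrow> sublist (window z r) v)"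
proof -
  obtain pre suf where ps: "wmorph \<psi> v = pre @ window y l @ suf" using W by (auto simp: sublist_def)
  have "length pre + l < length (wmorph \<psi> v)" using ps by simp
  then obtain v1 c v2 k where vs: "v = v1 @ c # v2" and Q: "length pre + l = length (wmorph \<psi> v1) + k"
    and kc: "k < length (\<psi> c)" using split_pos by blast
  have cA: "c \<in> Am" using v vs by auto
  have kK: "k < K" using kc K cA by fastforce
  define z where "z j = (if 0 \<le> j + int (length v1) \<and> j + int (length v1) < int (length v) then v ! nat (j + int (length v1)) else a0)" for j
  have zA: "\<forall>j. z j \<in> Am" using v a0 unfolding z_def by (auto intro!: nth_mem[THEN subsetD[OF v]])
  have NEz: "\<forall>i. \<psi> (z i) \<noteq> []" using zA NE by auto
  have sl1: "slice z (- int (length v1)) (length v1) = v1"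
    by (rule nth_equalityI) (auto simp: slice_def z_def vs nth_append)
  have sl2: "slice z (- int (length v1)) (length v) = v"
    by (rule nth_equalityI) (auto simp: slice_def z_def)
  have sp: "start_pos \<psi> z (- int (length v1)) = - int (length (wmorph \<psi> v1))"
    using conjunct1[OF ext_morph_slice[of \<psi> z "- int (length v1)" "length v1", OF NEz]] sl1 by simp
  have E: "\<forall>q<length (wmorph \<psi> v). ext_morph \<psi> z (- int (length (wmorph \<psi> v1)) + int q) = wmorph \<psi> v ! q"
    using conjunct2[OF ext_morph_slice[of \<psi> z "- int (length v1)" "length v", OF NEz]] sl2 sp by simp
  have part3: "\<forall>p. \<bar>p\<bar> \<le> int l \<longrightarrow> y p = ext_morph \<psi> z (p + int k)"
  proof (intro allI impI)
    fix p :: int assume p: "\<bar>p\<bar> \<le> int l"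
    define i where "i = nat (p + int l)"
    have i: "i < 2*l+1" "int i = p + int l" using p unfolding i_def by auto
    have "window y l ! i = y (int i - int l)" using window_nth[OF i(1), of y] .
    then have "y p = window y l ! i" using i(2) by simp
    also have "\<dots> = wmorph \<psi> v ! (length pre + i)" using ps i(1) by (simp add: nth_append)
    also have "\<dots> = ext_morph \<psi> z (- int (length (wmorph \<psi> v1)) + int (length pre + i))"
    proof -
      have "length pre + i < length (wmorph \<psi> v)" using ps i(1) by simp
      then show ?thesis using E[rule_format, of "length pre + i"] by simp
    qed
    also have "- int (length (wmorph \<psi> v1)) + int (length pre + i) = p + int k"
      using Q i(2) by linarith
    finally show "y p = ext_morph \<psi> z (p + int k)" .
  qed
  have part4: "sublist (window z r) v" if r: "K*(r+1) \<le> l" for r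
  proof -
    have l1: "length (wmorph \<psi> v1) \<le> K * length v1"
      by (rule length_wmorph_le) (use K v vs in auto)
    have l2: "length (wmorph \<psi> v2) \<le> K * length v2"
      by (rule length_wmorph_le) (use K v vs in auto)
    have lc: "length (\<psi> c) \<le> K" using K cA by auto
    have tot: "length (wmorph \<psi> v) = length pre + (2*l+1) + length suf" using ps by simp
    have tot2: "length (wmorph \<psi> v) = length (wmorph \<psi> v1) + length (\<psi> c) + length (wmorph \<psi> v2)"
      using vs by simp
    have Kr: "K * r + K \<le> l" using r by (simp add: algebra_simps)
    have "K * r < length (wmorph \<psi> v1)" using Q kK Kr by linarith
    then have "K * r < K * length v1" using l1 by linarith
    then have r1: "r < length v1" by (metis mult_less_cancel1)
    have "K * r < length (wmorph \<psi> v2)" using Q kK Kr tot tot2 lc by linarith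
    then have "K * r < K * length v2" using l2 by linarith
    then have r2: "r < length v2" by (metis mult_less_cancel1)
    have "window z r = take (2*r+1) (drop (length v1 - r) v)"
    proof (rule nth_equalityI)
      show "length (window z r) = length (take (2*r+1) (drop (length v1 - r) v))"
        using r1 r2 vs by simp
      fix i assume "i < length (window z r)"
      then have i: "i < 2*r+1" by simp
      have "window z r ! i = z (int i - int r)" using window_nth[OF i] .
      also have "\<dots> = v ! (length v1 - r + i)"
      proof -
        have e: "nat (int i - int r + int (length v1)) = length v1 - r + i" using r1 by linarith
        show ?thesis unfolding z_def using i r1 r2 vs e by auto
      qed
      also have "\<dots> = take (2*r+1) (drop (length v1 - r) v) ! i"
      proof -
        have "length v1 - r \<le> length v" using vs by simp
        then show ?thesis using i by (simp add: nth_drop)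
      qed
      finally show "window z r ! i = take (2*r+1) (drop (length v1 - r) v) ! i" .
    qed
    then show ?thesis by (simp only: sublist_take_drop)
  qed
  show ?thesis using zA kK part3 part4 by blast
qed

lemma infinite_unbounded: "infinite (S::nat set) \<Longrightarrow> \<exists>n\<ge>m. n \<in> S"
  by (meson finite_lessThan finite_subset lessThan_iff not_le subsetI)

definition refine :: "nat set \<Rightarrow> (nat \<Rightarrow> 'c) \<Rightarrow> nat set" where
  "refine S g = {l\<in>S. g l = g (SOME l0. l0 \<in> S \<and> infinite {l\<in>S. g l = g l0})}"

lemma refine_props:
  assumes "infinite S" "finite G" "\<forall>l. g l \<in> G"
  shows "infinite (refine S g) \<and> refine S g \<subseteq> S \<and> (\<forall>l\<in>refine S g. \<forall>l'\<in>refine S g. g l = g l')"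
proof -
  have "finite (g ` S)" using assms(2,3) by (metis finite_subset image_subsetI)
  then have "\<exists>l0. l0 \<in> S \<and> infinite {l\<in>S. g l = g l0}"
    using pigeonhole_infinite[OF assms(1)] by blast
  then have "infinite (refine S g)" unfolding refine_def by (rule someI_ex[THEN conjunct2])
  then show ?thesis unfolding refine_def by auto
qed

fun diagS :: "(nat \<Rightarrow> int \<Rightarrow> 'c) \<Rightarrow> nat \<Rightarrow> nat set" where
  "diagS Z 0 = refine UNIV (\<lambda>l. Z l 0)"
| "diagS Z (Suc r) = refine (diagS Z r) (\<lambda>l. (Z l (- (int r + 1)), Z l (int r + 1)))"

lemma refine_inf: "infinite S \<Longrightarrow> finite G \<Longrightarrow> \<forall>l. g l \<in> G \<Longrightarrow> infinite (refine S g)"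
  using refine_props by blast
lemma refine_sub: "refine S g \<subseteq> S"
  unfolding refine_def by blast
lemma refine_eq: "l \<in> refine S g \<Longrightarrow> l' \<in> refine S g \<Longrightarrow> g l = g l'"
  unfolding refine_def by simp

lemma diagS_props:
  assumes F: "finite F" and Z: "\<forall>l j. Z l j \<in> F"
  shows "infinite (diagS Z r) \<and> (\<forall>l\<in>diagS Z r. \<forall>l'\<in>diagS Z r. \<forall>j. \<bar>j\<bar> \<le> int r \<longrightarrow> Z l j = Z l' j)"
proof (induction r)
  case 0
  define g where "g = (\<lambda>l. Z l 0)"
  have gF: "\<forall>l. g l \<in> F" unfolding g_def using Z by blast
  have d0: "diagS Z 0 = refine UNIV g" unfolding g_def by simp
  have I: "infinite (diagS Z 0)" unfolding d0 by (rule refine_inf[OF _ F gF]) simp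
  have "\<forall>l\<in>diagS Z 0. \<forall>l'\<in>diagS Z 0. \<forall>j. \<bar>j\<bar> \<le> int 0 \<longrightarrow> Z l j = Z l' j"
  proof (intro ballI allI impI)
    fix l l' j assume lin: "l \<in> diagS Z 0" "l' \<in> diagS Z 0" and jb: "\<bar>j\<bar> \<le> int 0"
    have "g l = g l'" using refine_eq[of l UNIV g l'] lin unfolding d0 by blast
    moreover have "j = 0" using jb by simp
    ultimately show "Z l j = Z l' j" unfolding g_def by simp
  qed
  then show ?case using I by (rule conjI[rotated])
next
  case (Suc r)
  define g where "g = (\<lambda>l. (Z l (- (int r + 1)), Z l (int r + 1)))"
  have gF: "\<forall>l. g l \<in> F \<times> F" unfolding g_def using Z by blast
  have d0: "diagS Z (Suc r) = refine (diagS Z r) g" unfolding g_def by simp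
  have fF: "finite (F \<times> F)" using F by simp
  have I: "infinite (diagS Z (Suc r))" unfolding d0
    by (rule refine_inf[OF _ fF gF]) (rule conjunct1[OF Suc.IH])
  have sub: "diagS Z (Suc r) \<subseteq> diagS Z r" unfolding d0 by (rule refine_sub)
  have "Z l j = Z l' j" if lin: "l\<in>diagS Z (Suc r)" "l'\<in>diagS Z (Suc r)" and jb: "\<bar>j\<bar> \<le> int (Suc r)" for l l' j
  proof -
    have geq: "g l = g l'" using refine_eq[of l "diagS Z r" g l'] lin unfolding d0 by blast
    then have e1: "Z l (- (int r + 1)) = Z l' (- (int r + 1))" and e2: "Z l (int r + 1) = Z l' (int r + 1)"
      unfolding g_def by simp_all
    have ll: "l \<in> diagS Z r" "l' \<in> diagS Z r" using lin sub by (blast, blast)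
    consider "\<bar>j\<bar> \<le> int r" | "j = - (int r + 1)" | "j = int r + 1" using jb by linarith
    then show ?thesis
    proof cases
      case 1 then show ?thesis using conjunct2[OF Suc.IH] ll by blast
    next
      case 2 then show ?thesis using e1 by simp
    next
      case 3 then show ?thesis using e2 by simp
    qed
  qed
  then show ?case using I by blast
qed

lemma diagS_mono: "r \<le> r' \<Longrightarrow> diagS Z r' \<subseteq> diagS Z r"
proof (induction r' rule: dec_induct)
  case (step n)
  have "diagS Z (Suc n) \<subseteq> diagS Z n" by (simp only: diagS.simps refine_sub)
  then show ?case using step.IH by (rule order_trans)
qed simp

lemma diag:
  fixes Z :: "nat \<Rightarrow> int \<Rightarrow> 'c"
  assumes F: "finite F" and Z: "\<forall>l j. Z l j \<in> F"
  shows "\<exists>x. \<forall>r L. \<exists>l\<ge>L. \<forall>j. \<bar>j\<bar> \<le> int r \<longrightarrow> Z l j = x j"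
proof -
  define x where "x j = Z (SOME l. l \<in> diagS Z (nat \<bar>j\<bar>)) j" for j
  have "\<exists>l\<ge>L. \<forall>j. \<bar>j\<bar> \<le> int r \<longrightarrow> Z l j = x j" for r L
  proof -
    obtain l where l: "l \<ge> L" "l \<in> diagS Z r"
      using diagS_props[OF F Z, of r] infinite_unbounded by blast
    have "Z l j = x j" if j: "\<bar>j\<bar> \<le> int r" for j
    proof -
      have jr: "nat \<bar>j\<bar> \<le> r" using j by (simp add: nat_le_iff)
      have l1: "l \<in> diagS Z (nat \<bar>j\<bar>)" using diagS_mono[of "nat \<bar>j\<bar>" r Z, OF jr] l(2) by (rule subsetD)
      have s1: "(SOME l. l \<in> diagS Z (nat \<bar>j\<bar>)) \<in> diagS Z (nat \<bar>j\<bar>)"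
        using l1 by (rule someI)
      have jj: "\<bar>j\<bar> \<le> int (nat \<bar>j\<bar>)" by simp
      have ag: "\<forall>l\<in>diagS Z (nat \<bar>j\<bar>). \<forall>l'\<in>diagS Z (nat \<bar>j\<bar>). \<forall>j'. \<bar>j'\<bar> \<le> int (nat \<bar>j\<bar>) \<longrightarrow> Z l j' = Z l' j'"
        by (rule conjunct2[OF diagS_props[OF F Z]])
      have "Z l j = Z (SOME l. l \<in> diagS Z (nat \<bar>j\<bar>)) j"
        using ag l1 s1 jj by blast
      then show ?thesis unfolding x_def .
    qed
    then show ?thesis using l by blast
  qed
  then show ?thesis by blast
qed

lemma window_cong: "(\<And>j. \<bar>j\<bar> \<le> int r \<Longrightarrow> x j = x' j) \<Longrightarrow> window x r = window x' r"
  unfolding window_def by (rule map_cong) auto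

lemma slice_window:
  assumes "- int L \<le> a" "a + int n \<le> int L + 1"
  shows "slice x a n = take n (drop (nat (a + int L)) (window x L))"
proof (rule nth_equalityI)
  show "length (slice x a n) = length (take n (drop (nat (a + int L)) (window x L)))"
    using assms by (simp add: slice_def)
  fix i assume "i < length (slice x a n)"
  then have i: "i < n" by (simp add: slice_def)
  have "nat (a + int L) + i < 2*L+1" using assms i by linarith
  then show "slice x a n ! i = take n (drop (nat (a + int L)) (window x L)) ! i"
    using i assms by (simp add: slice_def window_nth)
qed

lemma slice_sublist_window:
  assumes "- int L \<le> a" "a + int n \<le> int L + 1"
  shows "sublist (slice x a n) (window x L)"
  using slice_window[OF assms, of x] by (simp only: sublist_take_drop)

lemma window_sublist_mono:
  assumes "l \<le> l'" shows "sublist (window x l) (window x l')"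
proof -
  have "window x l = slice x (- int l) (2*l+1)"
    unfolding slice_def window_def by (rule map_cong) auto
  then show ?thesis using slice_sublist_window[of l' "- int l" "2*l+1" x] assms by simp
qed

lemma subset_dir:
  fixes \<psi> :: "'a \<Rightarrow> 'b list" and y :: "int \<Rightarrow> 'b"
  assumes dA: "directive_seq A s" and dB: "directive_seq B t"
    and psi: "is_morphism (A m) (B n) \<psi>"
    and phiN: "\<forall>N\<ge>m. letter_onto (A N) (B N) (phi N)"
    and comm: "\<forall>N\<ge>m. \<forall>a\<in>A N. dcomp t n (N-n) (phi N a) = wmorph \<psi> (dcomp s m (N-m) [a])"
    and nm: "m \<le> Suc n"
    and y: "y \<in> level B t n"
  shows "y \<in> (\<Union>k. shiftk k ` ext_morph \<psi> ` level A s m)"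
proof -
  define K where "K = Max ((\<lambda>c. length (\<psi> c)) ` A m)"
  have finA: "finite (A m)" and neA: "A m \<noteq> {}" using dA by (auto simp: directive_seq_def)
  have Kb: "\<forall>c\<in>A m. length (\<psi> c) \<le> K" unfolding K_def using finA by auto
  have NE: "\<forall>c\<in>A m. \<psi> c \<noteq> []" using psi by (auto simp: is_morphism_def)
  obtain a0 where a0: "a0 \<in> A m" using neA by blast
  have step: "\<exists>z k. (\<forall>j. z j \<in> A m) \<and> k < K \<and> (\<forall>p. \<bar>p\<bar> \<le> int l \<longrightarrow> y p = ext_morph \<psi> z (p + int k))
     \<and> (\<forall>r. K*(r+1) \<le> l \<longrightarrow> (\<exists>N\<ge>m. \<exists>a\<in>A N. sublist (window z r) (dcomp s m (N-m) [a])))" for l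
  proof -
    obtain N b where Nb: "N > n" "b \<in> B N" "sublist (window y l) (dcomp t n (N-n) [b])"
      using y unfolding level_def by blast
    have Nm: "N \<ge> m" using Nb nm by simp
    obtain a where a: "a \<in> A N" "b \<in> set (phi N a)" using phiN Nm Nb unfolding letter_onto_def by blast
    have "sublist [b] (phi N a)" using a(2) by (rule mem_sublist)
    then have "sublist (dcomp t n (N-n) [b]) (dcomp t n (N-n) (phi N a))" by (rule dcomp_sublist)
    also have "dcomp t n (N-n) (phi N a) = wmorph \<psi> (dcomp s m (N-m) [a])" using comm Nm a by simp
    finally have W: "sublist (window y l) (wmorph \<psi> (dcomp s m (N-m) [a]))" using Nb(3) sublist_trans by blast
    have v: "set (dcomp s m (N-m) [a]) \<subseteq> A m" using dcomp_set[OF dA, of "[a]" m "N-m"] a Nm by simp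
    obtain z k where zk: "\<forall>j. z j \<in> A m" "k < K" "\<forall>p. \<bar>p\<bar> \<le> int l \<longrightarrow> y p = ext_morph \<psi> z (p + int k)"
      "\<forall>r. K*(r+1) \<le> l \<longrightarrow> sublist (window z r) (dcomp s m (N-m) [a])"
      using local_preimage[OF NE Kb a0 v W] by blast
    then show ?thesis using Nm a(1) by blast
  qed
  then obtain Zf kf where Zk: "\<And>l. (\<forall>j. Zf l j \<in> A m) \<and> kf l < K \<and> (\<forall>p. \<bar>p\<bar> \<le> int l \<longrightarrow> y p = ext_morph \<psi> (Zf l) (p + int (kf l)))
     \<and> (\<forall>r. K*(r+1) \<le> l \<longrightarrow> (\<exists>N\<ge>m. \<exists>a\<in>A N. sublist (window (Zf l) r) (dcomp s m (N-m) [a])))"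
  proof -
    define P where "P l zk \<longleftrightarrow> (\<forall>j. fst zk j \<in> A m) \<and> snd zk < K \<and> (\<forall>p. \<bar>p\<bar> \<le> int l \<longrightarrow> y p = ext_morph \<psi> (fst zk) (p + int (snd zk)))
     \<and> (\<forall>r. K*(r+1) \<le> l \<longrightarrow> (\<exists>N\<ge>m. \<exists>a\<in>A N. sublist (window (fst zk) r) (dcomp s m (N-m) [a])))" for l zk
    have "\<forall>l. \<exists>zk. P l zk"
    proof
      fix l
      obtain z k where "(\<forall>j. z j \<in> A m) \<and> k < K \<and> (\<forall>p. \<bar>p\<bar> \<le> int l \<longrightarrow> y p = ext_morph \<psi> z (p + int k))
     \<and> (\<forall>r. K*(r+1) \<le> l \<longrightarrow> (\<exists>N\<ge>m. \<exists>a\<in>A N. sublist (window z r) (dcomp s m (N-m) [a])))"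
        using step[of l] by (elim exE)
      then have "P l (z, k)" unfolding P_def by simp
      then show "\<exists>zk. P l zk" by (rule exI)
    qed
    then obtain ZK where ZK: "\<forall>l. P l (ZK l)" by (rule exE[OF choice])
    show ?thesis
    proof (rule that)
      fix l show "(\<forall>j. fst (ZK l) j \<in> A m) \<and> snd (ZK l) < K \<and> (\<forall>p. \<bar>p\<bar> \<le> int l \<longrightarrow> y p = ext_morph \<psi> (fst (ZK l)) (p + int (snd (ZK l))))
     \<and> (\<forall>r. K*(r+1) \<le> l \<longrightarrow> (\<exists>N\<ge>m. \<exists>a\<in>A N. sublist (window (fst (ZK l)) r) (dcomp s m (N-m) [a])))"
        using ZK unfolding P_def by blast
    qed
  qed
  define Z' where "Z' l j = (Zf l j, kf l)" for l j
  have "\<forall>l j. Z' l j \<in> A m \<times> {..<K}" using Zk unfolding Z'_def by auto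
  moreover have "finite (A m \<times> {..<K})" using finA by simp
  ultimately obtain x' where x': "\<forall>r L. \<exists>l\<ge>L. \<forall>j. \<bar>j\<bar> \<le> int r \<longrightarrow> Z' l j = x' j"
    using diag by blast
  define x where "x j = fst (x' j)" for j
  define k where "k = snd (x' 0)"
  have agree: "\<exists>l\<ge>L. kf l = k \<and> (\<forall>j. \<bar>j\<bar> \<le> int r \<longrightarrow> Zf l j = x j)" for r L
  proof -
    obtain l where l: "l \<ge> L" "\<forall>j. \<bar>j\<bar> \<le> int r \<longrightarrow> Z' l j = x' j" using x' by blast
    then have "Z' l 0 = x' 0" by simp
    then have "snd (Z' l 0) = snd (x' 0)" by (rule arg_cong)
    then have kk: "kf l = k" unfolding k_def Z'_def by simp
    have jj: "Zf l j = x j" if "\<bar>j\<bar> \<le> int r" for j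
    proof -
      have "Z' l j = x' j" using l(2) that by blast
      then have "fst (Z' l j) = fst (x' j)" by (rule arg_cong)
      then show ?thesis unfolding x_def Z'_def by simp
    qed
    show ?thesis using l(1) kk jj by blast
  qed
  have xA: "\<forall>j. x j \<in> A m"
  proof
    fix j
    obtain l where "\<forall>i. \<bar>i\<bar> \<le> int (nat \<bar>j\<bar>) \<longrightarrow> Zf l i = x i" using agree by blast
    moreover have "\<bar>j\<bar> \<le> int (nat \<bar>j\<bar>)" by simp
    ultimately have e: "Zf l j = x j" by blast
    have "Zf l j \<in> A m" using Zk[of l] by blast
    then show "x j \<in> A m" using e by simp
  qed
  have NEx: "\<forall>i. \<psi> (x i) \<noteq> []" using xA NE by auto
  have xlev: "x \<in> level A s m"
    unfolding level_def
  proof (intro CollectI conjI allI)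
    fix j show "x j \<in> A m" using xA by simp
  next
    fix l
    obtain l0 where l0: "l0 \<ge> K * (l + 2)" "\<forall>j. \<bar>j\<bar> \<le> int (l+1) \<longrightarrow> Zf l0 j = x j"
      using agree by blast
    have "window (Zf l0) (l+1) = window x (l+1)" using l0(2) by (intro window_cong) auto
    moreover obtain N a where Na: "N \<ge> m" "a \<in> A N" "sublist (window (Zf l0) (l+1)) (dcomp s m (N-m) [a])"
    proof -
      have "K * ((l+1)+1) \<le> l0" using l0(1) by (simp add: numeral_2_eq_2)
      then show ?thesis using Zk[of l0] that by blast
    qed
    ultimately have W: "sublist (window x (l+1)) (dcomp s m (N-m) [a])" by simp
    have "N \<noteq> m"
    proof
      assume "N = m"
      then have "length (window x (l+1)) \<le> 1" using sublist_length_le[OF W] by simp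
      then show False by simp
    qed
    then have "N > m" using Na by simp
    moreover have "sublist (window x l) (dcomp s m (N-m) [a])"
      using window_sublist_mono[of l "l+1" x] W sublist_trans by fastforce
    ultimately show "\<exists>N>m. \<exists>a\<in>A N. sublist (window x l) (dcomp s m (N - m) [a])" using Na by blast
  qed
  have "y = shiftk (int k) (ext_morph \<psi> x)"
  proof
    fix p
    obtain l where l: "l \<ge> nat \<bar>p\<bar>" "kf l = k" "\<forall>j. \<bar>j\<bar> \<le> int (nat \<bar>p\<bar> + K) \<longrightarrow> Zf l j = x j"
      using agree by blast
    have "y p = ext_morph \<psi> (Zf l) (p + int k)" using Zk[of l] l by auto
    also have "\<dots> = ext_morph \<psi> x (p + int k)"
    proof (rule ext_morph_local[where r = "int (nat \<bar>p\<bar> + K)"])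
      show "\<forall>i. \<psi> (Zf l i) \<noteq> []" using Zk NE by blast
      show "\<forall>i. \<psi> (x i) \<noteq> []" by (rule NEx)
      show "\<And>j. \<bar>j\<bar> \<le> int (nat \<bar>p\<bar> + K) \<Longrightarrow> Zf l j = x j" using l by blast
      show "\<bar>p + int k\<bar> \<le> int (nat \<bar>p\<bar> + K)" using Zk[of l] l(2) by linarith
    qed
    finally show "y p = shiftk (int k) (ext_morph \<psi> x) p" by (simp add: shiftk_def)
  qed
  then show ?thesis using xlev by blast
qed

lemma growth_level:
  assumes dB: "directive_seq B t" and gB: "everywhere_growing B t"
  shows "\<exists>N0\<ge>j. \<forall>N\<ge>N0. \<forall>e\<in>B N. M \<le> length (dcomp t j (N-j) [e])"
proof -
  define C where "C = Max ((\<lambda>c. length (dcomp t 0 j [c])) ` B j)"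
  have fin: "finite (B j)" and ne: "B j \<noteq> {}" using dB by (auto simp: directive_seq_def)
  have Cb: "\<forall>c\<in>B j. length (dcomp t 0 j [c]) \<le> C" unfolding C_def using fin by auto
  obtain c0 where c0: "c0 \<in> B j" using ne by blast
  have "1 \<le> length (dcomp t 0 j [c0])" using dcomp_nonempty[OF dB, of "[c0]" 0 j] c0 by simp
  then have C1: "1 \<le> C" using Cb c0 by fastforce
  obtain N1 where N1: "\<forall>N\<ge>N1. \<forall>a\<in>B N. M * C \<le> length (dcomp t 0 N [a])"
    using gB unfolding everywhere_growing_def by blast
  have "\<forall>N\<ge>max N1 j. \<forall>e\<in>B N. M \<le> length (dcomp t j (N-j) [e])"
  proof (intro allI impI ballI)
    fix N e assume N: "max N1 j \<le> N" and e: "e \<in> B N"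
    define w where "w = dcomp t j (N-j) [e]"
    have wB: "set w \<subseteq> B j" unfolding w_def using dcomp_set[OF dB, of "[e]" j "N-j"] N e by simp
    have "dcomp t 0 N [e] = dcomp t 0 j w"
      unfolding w_def using dcomp_add[of t 0 j "N-j" "[e]"] N by simp
    also have "\<dots> = wmorph (\<lambda>c. dcomp t 0 j [c]) w" by (rule dcomp_wmorph)
    finally have "length (dcomp t 0 N [e]) \<le> C * length w"
      using length_wmorph_le[of w "\<lambda>c. dcomp t 0 j [c]" C] Cb wB by auto
    moreover have "M * C \<le> length (dcomp t 0 N [e])" using N1 N e by auto
    ultimately have "C * M \<le> C * length w" by (metis mult.commute le_trans)
    then have "M \<le> length w" using C1 by simp
    then show "M \<le> length (dcomp t j (N-j) [e])" unfolding w_def by simp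
  qed
  then show ?thesis by (intro exI[of _ "max N1 j"]) simp
qed

lemma cover:
  "(\<forall>c\<in>set \<omega>. length p \<le> length (g c)) \<Longrightarrow> sublist p (wmorph g \<omega>) \<Longrightarrow>
    \<exists>\<omega>'. sublist \<omega>' \<omega> \<and> length \<omega>' \<le> 2 \<and> sublist p (wmorph g \<omega>')"
proof (induction \<omega>)
  case Nil then show ?case by (intro exI[of _ "[]"]) simp
next
  case (Cons c \<omega>)
  have "sublist p (g c @ wmorph g \<omega>)" using Cons.prems by simp
  then consider "sublist p (g c)" | "sublist p (wmorph g \<omega>)"
    | p1 p2 where "p = p1 @ p2" "suffix p1 (g c)" "prefix p2 (wmorph g \<omega>)"
    unfolding sublist_append by blast
  then show ?case
  proof cases
    case 1 then show ?thesis
      by (intro exI[of _ "[c]"]) (auto simp: sublist_def intro: exI[of _ "[]"])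
  next
    case 2
    then obtain \<omega>' where o: "sublist \<omega>' \<omega>" "length \<omega>' \<le> 2" "sublist p (wmorph g \<omega>')"
      using Cons by auto
    have "sublist \<omega>' (c # \<omega>)" using o(1) by (rule sublist_Cons2)
    then show ?thesis using o(2,3) by (intro exI[of _ \<omega>'] conjI)
  next
    case 3
    show ?thesis
    proof (cases \<omega>)
      case Nil
      then have "p2 = []" using 3 by simp
      then have "sublist p (g c)" using 3 by auto
      then show ?thesis
        by (intro exI[of _ "[c]"]) (auto simp: sublist_def intro: exI[of _ "[]"])
    next
      case (Cons d \<omega>2)
      have len: "length p2 \<le> length (g d)" using Cons.prems(1) 3 Cons by auto
      have "prefix p2 (g d @ wmorph g \<omega>2)" using 3 Cons by simp
      then have "prefix p2 (g d)" using len unfolding prefix_append by auto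
      then obtain r where r: "g d = p2 @ r" by (auto simp: prefix_def)
      obtain q where q: "g c = q @ p1" using 3 by (auto simp: suffix_def)
      have "wmorph g [c, d] = q @ p @ r" using q r 3 by simp
      then have "sublist p (wmorph g [c,d])" by simp
      moreover have "sublist [c,d] (c # \<omega>)" using Cons by (simp add: sublist_Cons_right)
      ultimately show ?thesis by (intro exI[of _ "[c,d]"]) simp
    qed
  qed
qed

lemma pair_sub:
  "sublist [c,d] (wmorph g \<beta>) \<Longrightarrow> \<forall>b\<in>set \<beta>. g b \<noteq> [] \<Longrightarrow>
   (\<exists>b\<in>set \<beta>. sublist [c,d] (g b)) \<or> (\<exists>b1\<in>set \<beta>. \<exists>b2\<in>set \<beta>. c = last (g b1) \<and> d = hd (g b2))"
proof (induction \<beta>)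
  case Nil then show ?case by simp
next
  case (Cons b \<beta>)
  have "sublist [c,d] (g b @ wmorph g \<beta>)" using Cons.prems by simp
  then consider "sublist [c,d] (g b)" | "sublist [c,d] (wmorph g \<beta>)"
    | p1 p2 where "[c,d] = p1 @ p2" "suffix p1 (g b)" "prefix p2 (wmorph g \<beta>)"
    unfolding sublist_append by blast
  then show ?case
  proof cases
    case 1 then show ?thesis by auto
  next
    case 2 then show ?thesis using Cons by auto
  next
    case 3
    have t1: "p1 = take (length p1) [c,d]" "p2 = drop (length p1) [c,d]"
      unfolding 3(1) by simp_all
    have "length [c,d] = length p1 + length p2" unfolding 3(1) by simp
    then have "length p1 \<le> 2" by simp
    then consider "length p1 = 0" | "length p1 = 1" | "length p1 = 2" by linarith
    then consider "p1 = []" "p2 = [c,d]" | "p1 = [c]" "p2 = [d]" | "p1 = [c,d]" "p2 = []"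
    proof cases
      case 1 then show ?thesis using that(1) t1 by simp
    next
      case 2 then show ?thesis using that(2) t1 by simp
    next
      case 3 then show ?thesis using that(3) t1 by simp
    qed
    then show ?thesis
    proof cases
      case 1 then have "sublist [c,d] (wmorph g \<beta>)" using 3 by auto
      then show ?thesis using Cons by auto
    next
      case 2
      have c: "c = last (g b)" using 3(2) 2 by (auto simp: suffix_def)
      have "wmorph g \<beta> \<noteq> []" using 3(3) 2 by auto
      then obtain b2 \<beta>2 where b2: "\<beta> = b2 # \<beta>2" by (cases \<beta>) auto
      then have "g b2 \<noteq> []" using Cons.prems by simp
      have "prefix [d] (g b2 @ wmorph g \<beta>2)" using 3(3) 2 b2 by simp
      then have "hd (g b2 @ wmorph g \<beta>2) = d" by (auto simp: prefix_def)
      then have "d = hd (g b2)" using \<open>g b2 \<noteq> []\<close> by simp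
      then show ?thesis using c b2 by auto
    next
      case 3 then show ?thesis using \<open>suffix p1 (g b)\<close> by auto
    qed
  qed
qed

lemma force_large:
  assumes x: "x \<in> level A s m" and dA: "directive_seq A s"
  shows "\<exists>N>N0. \<exists>a\<in>A N. sublist (window x L) (dcomp s m (N-m) [a])"
proof -
  define S where "S = (\<Union>N\<in>{..N0}. (\<lambda>a. length (dcomp s m (N-m) [a])) ` A N)"
  have finS: "finite S" unfolding S_def using dA by (auto simp: directive_seq_def)
  define L' where "L' = L + Max S"
  obtain N a where Na: "N > m" "a \<in> A N" "sublist (window x L') (dcomp s m (N-m) [a])"
    using x unfolding level_def by blast
  have N: "N > N0"
  proof (rule ccontr)
    assume "\<not> N0 < N"
    then have "length (dcomp s m (N-m) [a]) \<in> S" unfolding S_def using Na by auto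
    then have "length (dcomp s m (N-m) [a]) \<le> Max S" using finS by simp
    moreover have "2*L'+1 \<le> length (dcomp s m (N-m) [a])" using sublist_length_le[OF Na(3)] by simp
    ultimately show False unfolding L'_def by simp
  qed
  have "sublist (window x L) (dcomp s m (N-m) [a])"
    using window_sublist_mono[of L L' x] Na(3) sublist_trans unfolding L'_def by fastforce
  then show ?thesis using N Na by blast
qed

lemma boundary_pair:
  assumes dB: "directive_seq B t" and gB: "everywhere_growing B t"
    and uv: "\<forall>b\<in>B (Suc N). hd (t N b) = u \<and> last (t N b) = v"
  shows "\<exists>M>N. \<exists>e\<in>B M. sublist [v,u] (dcomp t N (M-N) [e])"
proof -
  obtain N1 where N1: "N1 \<ge> Suc N" "\<forall>M\<ge>N1. \<forall>e\<in>B M. 2 \<le> length (dcomp t (Suc N) (M - Suc N) [e])"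
    using growth_level[OF dB gB, of "Suc N" 2] by blast
  obtain e where e: "e \<in> B N1" using dB unfolding directive_seq_def by blast
  define \<rho> where "\<rho> = dcomp t (Suc N) (N1 - Suc N) [e]"
  have \<rho>B: "set \<rho> \<subseteq> B (Suc N)" unfolding \<rho>_def using dcomp_set[OF dB, of "[e]" "Suc N" "N1 - Suc N"] N1 e by simp
  have "2 \<le> length \<rho>" unfolding \<rho>_def using N1 e by blast
  then obtain r1 r2 rest where \<rho>: "\<rho> = r1 # r2 # rest"
    by (cases \<rho>; cases "tl \<rho>") auto
  have r12: "r1 \<in> B (Suc N)" "r2 \<in> B (Suc N)" using \<rho>B \<rho> by auto
  have ne: "t N r1 \<noteq> []" "t N r2 \<noteq> []" using dB r12 by (auto simp: directive_seq_def is_morphism_def)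
  have "dcomp t N (N1 - N) [e] = dcomp t N 1 \<rho>"
    unfolding \<rho>_def using dcomp_add[of t N 1 "N1 - Suc N" "[e]"] N1 by (simp add: Suc_diff_Suc)
  also have "\<dots> = t N r1 @ t N r2 @ wmorph (t N) rest" using \<rho> by simp
  finally have D: "dcomp t N (N1 - N) [e] = t N r1 @ t N r2 @ wmorph (t N) rest" .
  have "t N r1 = butlast (t N r1) @ [v]" using ne(1) uv r12 by (metis append_butlast_last_id)
  moreover have "t N r2 = u # tl (t N r2)" using ne(2) uv r12 by (metis list.exhaust_sel)
  ultimately have "dcomp t N (N1 - N) [e] = butlast (t N r1) @ [v,u] @ (tl (t N r2) @ wmorph (t N) rest)"
    using D by simp
  then have "sublist [v,u] (dcomp t N (N1 - N) [e])" by (simp only: sublist_appendI)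
  then show ?thesis using N1 e by (intro exI[of _ N1]) auto
qed

lemma G_lemma:
  fixes \<psi> :: "'a \<Rightarrow> 'b list"
  assumes dA: "directive_seq A s" and dB: "directive_seq B t" and gB: "everywhere_growing B t"
    and pB: "proper_seq B t"
    and phiM: "\<forall>N\<ge>m. is_morphism (A N) (B N) (phi N)"
    and comm: "\<forall>N\<ge>m. \<forall>a\<in>A N. dcomp t n (N-n) (phi N a) = wmorph \<psi> (dcomp s m (N-m) [a])"
    and nm: "m \<le> Suc n"
    and x: "x \<in> level A s m"
  shows "\<exists>N>n. \<exists>b\<in>B N. sublist (wmorph \<psi> (window x L)) (dcomp t n (N-n) [b])"
proof -
  define u where "u = window x L"
  define M0 where "M0 = length (wmorph \<psi> u)"
  obtain N0 where N0: "N0 \<ge> n" "\<forall>N\<ge>N0. \<forall>e\<in>B N. M0 \<le> length (dcomp t n (N-n) [e])"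
    using growth_level[OF dB gB, of n M0] by blast
  obtain N' a' where Na: "N' > N0" "a' \<in> A N'" "sublist u (dcomp s m (N'-m) [a'])"
    using force_large[OF x dA, of N0 L] unfolding u_def by blast
  have N'm: "N' \<ge> m" using Na N0 nm by simp
  define \<beta> where "\<beta> = phi N' a'"
  have \<beta>B: "set \<beta> \<subseteq> B N'" using phiM N'm Na unfolding \<beta>_def is_morphism_def by blast
  define N where "N = N' - 1"
  have NN': "N' = Suc N" unfolding N_def using Na by simp
  have NN0: "N \<ge> N0" using Na NN' by simp
  define \<omega> where "\<omega> = wmorph (t N) \<beta>"
  have \<omega>B: "set \<omega> \<subseteq> B N" unfolding \<omega>_def using \<beta>B dB NN'
    by (auto simp: set_wmorph directive_seq_def is_morphism_def)
  have "sublist (wmorph \<psi> u) (wmorph \<psi> (dcomp s m (N'-m) [a']))" using Na(3) by (rule sublist_wmorph)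
  also have "wmorph \<psi> (dcomp s m (N'-m) [a']) = dcomp t n (N'-n) \<beta>" using comm N'm Na unfolding \<beta>_def by simp
  also have "dcomp t n (N'-n) \<beta> = dcomp t n (N-n) \<omega>"
  proof -
    have "N' - n = Suc (N - n)" using NN' NN0 N0 by simp
    then show ?thesis unfolding \<omega>_def using dcomp_Suc_right[of t n "N-n" \<beta>] NN0 N0 by simp
  qed
  also have "\<dots> = wmorph (\<lambda>c. dcomp t n (N-n) [c]) \<omega>" by (rule dcomp_wmorph)
  finally have S1: "sublist (wmorph \<psi> u) (wmorph (\<lambda>c. dcomp t n (N-n) [c]) \<omega>)" .
  have "\<forall>c\<in>set \<omega>. length (wmorph \<psi> u) \<le> length (dcomp t n (N-n) [c])"
    using N0(2) NN0 \<omega>B unfolding M0_def by blast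
  then obtain \<omega>' where \<omega>': "sublist \<omega>' \<omega>" "length \<omega>' \<le> 2"
    "sublist (wmorph \<psi> u) (wmorph (\<lambda>c. dcomp t n (N-n) [c]) \<omega>')"
    using cover[OF _ S1] by blast
  have S2: "sublist (wmorph \<psi> u) (dcomp t n (N-n) \<omega>')" unfolding dcomp_wmorph[of t n "N-n" \<omega>'] by (rule \<omega>'(3))
  have H1: "sublist (dcomp t n (N-n) \<omega>') (dcomp t n (N'-n) [b])" if "b \<in> set \<beta>" "sublist \<omega>' (t N b)" for b
  proof -
    have "N' - n = Suc (N - n)" using NN' NN0 N0 by simp
    then have "dcomp t n (N'-n) [b] = dcomp t n (N-n) (t N b)"
      using dcomp_Suc_right[of t n "N-n" "[b]"] NN0 N0 by simp
    then show ?thesis using dcomp_sublist[OF that(2)] by simp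
  qed
  have goal: "\<exists>N''>n. \<exists>b\<in>B N''. sublist (dcomp t n (N-n) \<omega>') (dcomp t n (N''-n) [b])"
  proof -
    have N'n: "N' > n" using Na N0 by simp
    consider "\<omega>' = []" | c where "\<omega>' = [c]" | c d where "\<omega>' = [c,d]"
      using \<omega>'(2) by (cases \<omega>' rule: remdups_adj.cases) auto
    then show ?thesis
    proof cases
      case 1
      obtain b where "b \<in> B N'" using dB unfolding directive_seq_def by blast
      then show ?thesis using 1 N'n by auto
    next
      case (2 c)
      then have "c \<in> set \<omega>" using \<omega>'(1) set_mono_sublist by fastforce
      then obtain b where b: "b \<in> set \<beta>" "c \<in> set (t N b)" unfolding \<omega>_def by (auto simp: set_wmorph)
      then have "sublist \<omega>' (t N b)" using 2 b(2) by (simp add: mem_sublist)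
      then show ?thesis using H1[OF b(1)] b(1) \<beta>B N'n by blast
    next
      case (3 c d)
      have neb: "\<forall>b\<in>set \<beta>. t N b \<noteq> []" using \<beta>B dB NN' by (auto simp: directive_seq_def is_morphism_def)
      have "sublist [c,d] (wmorph (t N) \<beta>)" using \<omega>'(1) 3 unfolding \<omega>_def by simp
      from pair_sub[OF this neb]
      show ?thesis
      proof
        assume "\<exists>b\<in>set \<beta>. sublist [c, d] (t N b)"
        then show ?thesis using H1 3 \<beta>B N'n by blast
      next
        assume "\<exists>b1\<in>set \<beta>. \<exists>b2\<in>set \<beta>. c = last (t N b1) \<and> d = hd (t N b2)"
        then obtain b1 b2 where bb: "b1 \<in> set \<beta>" "b2 \<in> set \<beta>" "c = last (t N b1)" "d = hd (t N b2)" by blast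
        obtain uu vv where uv: "\<forall>b\<in>B (Suc N). hd (t N b) = uu \<and> last (t N b) = vv"
          using pB unfolding proper_seq_def proper_morph_def by blast
        have cd: "c = vv" "d = uu" using uv bb \<beta>B NN' by auto
        obtain M e where Me: "M > N" "e \<in> B M" "sublist [vv,uu] (dcomp t N (M-N) [e])"
          using boundary_pair[OF dB gB uv] by blast
        have "sublist (dcomp t n (N-n) [c,d]) (dcomp t n (N-n) (dcomp t N (M-N) [e]))"
          using dcomp_sublist[OF Me(3)] cd by simp
        also have "dcomp t n (N-n) (dcomp t N (M-N) [e]) = dcomp t n (M-n) [e]"
          using dcomp_add[of t n "N-n" "M-N" "[e]"] NN0 N0 Me(1) by simp
        finally show ?thesis using 3 Me N0 NN0 by (intro exI[of _ M]) auto
      qed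
    qed
  qed
  then show ?thesis using S2 sublist_trans unfolding u_def by blast
qed

lemma supset_dir:
  fixes \<psi> :: "'a \<Rightarrow> 'b list"
  assumes dA: "directive_seq A s" and dB: "directive_seq B t" and gB: "everywhere_growing B t"
    and pB: "proper_seq B t"
    and psi: "is_morphism (A m) (B n) \<psi>"
    and phiM: "\<forall>N\<ge>m. is_morphism (A N) (B N) (phi N)"
    and comm: "\<forall>N\<ge>m. \<forall>a\<in>A N. dcomp t n (N-n) (phi N a) = wmorph \<psi> (dcomp s m (N-m) [a])"
    and nm: "m \<le> Suc n"
    and x: "x \<in> level A s m"
  shows "shiftk k (ext_morph \<psi> x) \<in> level B t n"
proof -
  have xA: "\<forall>i. x i \<in> A m" using x unfolding level_def by blast
  have NE: "\<forall>i. \<psi> (x i) \<noteq> []" using xA psi unfolding is_morphism_def by blast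
  define E where "E = ext_morph \<psi> x"
  have letters: "shiftk k E p \<in> B n" for p
  proof -
    obtain i where "E (p + k) \<in> set (\<psi> (x i))" using ext_morph_in[of \<psi> x, OF NE] unfolding E_def by blast
    then show ?thesis using xA psi unfolding is_morphism_def shiftk_def by blast
  qed
  have windows: "\<exists>N>n. \<exists>b\<in>B N. sublist (window (shiftk k E) l) (dcomp t n (N - n) [b])" for l
  proof -
    obtain i1 k1 where b1: "k1 < length (\<psi> (x i1))" "k - int l = start_pos \<psi> x i1 + int k1"
      using block_exists[of \<psi> x, OF NE] by blast
    obtain i2 k2 where b2: "k2 < length (\<psi> (x i2))" "k + int l = start_pos \<psi> x i2 + int k2"
      using block_exists[of \<psi> x, OF NE] by blast
    have sp2: "k + int l < start_pos \<psi> x (i2 + 1)" using b2 start_pos_Suc[of \<psi> x i2] by simp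
    have i12: "i1 \<le> i2"
    proof (rule ccontr)
      assume "\<not> i1 \<le> i2"
      then have "start_pos \<psi> x (i2+1) \<le> start_pos \<psi> x i1" using start_pos_mono[of \<psi> x "i2+1" i1, OF NE] by simp
      then show False using sp2 b1 by simp
    qed
    define nn where "nn = nat (i2 + 1 - i1)"
    have nn: "i1 + int nn = i2 + 1" unfolding nn_def using i12 by simp
    define w where "w = slice x i1 nn"
    have sl: "start_pos \<psi> x (i2 + 1) = start_pos \<psi> x i1 + int (length (wmorph \<psi> w))"
      "\<forall>q<length (wmorph \<psi> w). E (start_pos \<psi> x i1 + int q) = wmorph \<psi> w ! q"
      using ext_morph_slice[of \<psi> x i1 nn, OF NE] nn unfolding w_def E_def by auto
    have lenw: "k1 + 2*l + 1 \<le> length (wmorph \<psi> w)" using sl(1) sp2 b1 by linarith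
    have "window (shiftk k E) l = take (2*l+1) (drop k1 (wmorph \<psi> w))"
    proof (rule nth_equalityI)
      show "length (window (shiftk k E) l) = length (take (2*l+1) (drop k1 (wmorph \<psi> w)))"
        using lenw by simp
      fix i assume "i < length (window (shiftk k E) l)"
      then have i: "i < 2*l+1" by simp
      have "window (shiftk k E) l ! i = E (int i - int l + k)" using window_nth[OF i] by (simp add: shiftk_def)
      also have "int i - int l + k = start_pos \<psi> x i1 + int (k1 + i)" using b1 by simp
      also have "E \<dots> = wmorph \<psi> w ! (k1 + i)"
      proof -
        have "k1 + i < length (wmorph \<psi> w)" using lenw i by simp
        then show ?thesis using sl(2) by blast
      qed
      also have "\<dots> = take (2*l+1) (drop k1 (wmorph \<psi> w)) ! i" using i lenw by simp
      finally show "window (shiftk k E) l ! i = take (2*l+1) (drop k1 (wmorph \<psi> w)) ! i" .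
    qed
    then have W1: "sublist (window (shiftk k E) l) (wmorph \<psi> w)" by (simp only: sublist_take_drop)
    define L where "L = nat (max \<bar>i1\<bar> \<bar>i2\<bar>)"
    have "sublist w (window x L)" unfolding w_def L_def
      by (rule slice_sublist_window) (use nn in auto)
    then have W2: "sublist (wmorph \<psi> w) (wmorph \<psi> (window x L))" by (rule sublist_wmorph)
    obtain N b where "N > n" "b \<in> B N" "sublist (wmorph \<psi> (window x L)) (dcomp t n (N-n) [b])"
      using G_lemma[OF dA dB gB pB phiM comm nm x] by blast
    then show ?thesis using W1 W2 sublist_trans by blast
  qed
  show ?thesis unfolding level_def E_def[symmetric] using letters windows by blast
qed

lemma comm_n:
  assumes dA: "directive_seq A s" and f: "is_factor A s B t phi"
  shows "n \<ge> 1 \<Longrightarrow> \<forall>a\<in>A (n+d). dcomp t n d (phi (n+d) a) = wmorph (phi n) (dcomp s n d [a])"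
proof (induction d arbitrary: n)
  case 0 then show ?case by simp
next
  case (Suc d)
  show ?case
  proof
    fix a assume a: "a \<in> A (n + Suc d)"
    define w where "w = dcomp s (Suc n) d [a]"
    have wA: "set w \<subseteq> A (Suc n)" unfolding w_def using dcomp_set[OF dA, of "[a]" "Suc n" d] a by simp
    have "dcomp t n (Suc d) (phi (n + Suc d) a) = wmorph (t n) (dcomp t (Suc n) d (phi (Suc n + d) a))"
      by simp
    also have "\<dots> = wmorph (t n) (wmorph (phi (Suc n)) w)" using Suc.IH[of "Suc n"] a unfolding w_def by simp
    also have "\<dots> = wmorph (\<lambda>c. wmorph (t n) (phi (Suc n) c)) w" by (rule wmorph_comp)
    also have "\<dots> = wmorph (\<lambda>c. wmorph (phi n) (s n c)) w"
      using wA f Suc.prems unfolding is_factor_def by (intro wmorph_cong) auto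
    also have "\<dots> = wmorph (phi n) (wmorph (s n) w)" by (rule wmorph_comp[symmetric])
    also have "\<dots> = wmorph (phi n) (dcomp s n (Suc d) [a])" unfolding w_def by simp
    finally show "dcomp t n (Suc d) (phi (n + Suc d) a) = wmorph (phi n) (dcomp s n (Suc d) [a])" .
  qed
qed

lemma comm_0:
  assumes dA: "directive_seq A s" and f: "is_factor A s B t phi"
  shows "\<forall>N\<ge>1. \<forall>a\<in>A N. dcomp t 0 (N-0) (phi N a) = wmorph (phi 0) (dcomp s 1 (N-1) [a])"
proof (intro allI impI ballI)
  fix N a assume N: "1 \<le> N" and a: "a \<in> A N"
  obtain d where d: "N = Suc d" using N by (cases N) auto
  define w where "w = dcomp s 1 d [a]"
  have wA: "set w \<subseteq> A 1" unfolding w_def using dcomp_set[OF dA, of "[a]" 1 d] a d by simp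
  have "dcomp t 0 (N-0) (phi N a) = wmorph (t 0) (dcomp t 1 d (phi (1+d) a))" using d by simp
  also have "\<dots> = wmorph (t 0) (wmorph (phi 1) w)"
    using comm_n[OF dA f, of 1 d] a d unfolding w_def by simp
  also have "\<dots> = wmorph (\<lambda>c. wmorph (t 0) (phi 1 c)) w" by (rule wmorph_comp)
  also have "\<dots> = wmorph (phi 0) w"
    using wA f unfolding is_factor_def by (intro wmorph_cong) auto
  finally show "dcomp t 0 (N-0) (phi N a) = wmorph (phi 0) (dcomp s 1 (N-1) [a])" using d w_def by simp
qed

lemma level_eq:
  fixes \<psi> :: "'a \<Rightarrow> 'b list"
  assumes dA: "directive_seq A s" and dB: "directive_seq B t" and gB: "everywhere_growing B t"
    and pB: "proper_seq B t"
    and psi: "is_morphism (A m) (B n) \<psi>"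
    and phiM: "\<forall>N\<ge>m. is_morphism (A N) (B N) (phi N)"
    and phiO: "\<forall>N\<ge>m. letter_onto (A N) (B N) (phi N)"
    and comm: "\<forall>N\<ge>m. \<forall>a\<in>A N. dcomp t n (N-n) (phi N a) = wmorph \<psi> (dcomp s m (N-m) [a])"
    and nm: "m \<le> Suc n"
  shows "level B t n = (\<Union>k. shiftk k ` ext_morph \<psi> ` level A s m)"
proof
  show "level B t n \<subseteq> (\<Union>k. shiftk k ` ext_morph \<psi> ` level A s m)"
    using subset_dir[OF dA dB psi phiO comm nm] by blast
  show "(\<Union>k. shiftk k ` ext_morph \<psi> ` level A s m) \<subseteq> level B t n"
    using supset_dir[OF dA dB gB pB psi phiM comm nm] by blast
qed

theorem lemma4p3:
  fixes A :: "nat \<Rightarrow> 'a set" and s :: "nat \<Rightarrow> 'a \<Rightarrow> 'a list"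
    and B :: "nat \<Rightarrow> 'b set" and t :: "nat \<Rightarrow> 'b \<Rightarrow> 'b list"
    and phi :: "nat \<Rightarrow> 'a \<Rightarrow> 'b list"
  assumes "directive_seq A s" and "everywhere_growing A s" and "proper_seq A s"
    and "directive_seq B t" and "everywhere_growing B t" and "proper_seq B t"
    and "is_factor A s B t phi" and "letter_onto_factor A B phi"
  shows "level B t 0 = (\<Union>k. shiftk k ` ext_morph (phi 0) ` level A s 1) \<and>
         (\<forall>n\<ge>1. level B t n = (\<Union>k. shiftk k ` ext_morph (phi n) ` level A s n))"
proof
  have f: "is_morphism (A 1) (B 0) (phi 0)" "\<forall>n\<ge>1. is_morphism (A n) (B n) (phi n)"
    using assms(7) unfolding is_factor_def by auto
  have o: "\<forall>n\<ge>1. letter_onto (A n) (B n) (phi n)" using assms(8) unfolding letter_onto_factor_def by auto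
  show "level B t 0 = (\<Union>k. shiftk k ` ext_morph (phi 0) ` level A s 1)"
    by (rule level_eq[OF assms(1,4,5,6) f(1) f(2) o comm_0[OF assms(1,7)]]) simp
  show "\<forall>n\<ge>1. level B t n = (\<Union>k. shiftk k ` ext_morph (phi n) ` level A s n)"
  proof (intro allI impI)
    fix n :: nat assume n: "1 \<le> n"
    have c: "\<forall>N\<ge>n. \<forall>a\<in>A N. dcomp t n (N-n) (phi N a) = wmorph (phi n) (dcomp s n (N-n) [a])"
    proof (intro allI impI)
      fix N assume "n \<le> N"
      then show "\<forall>a\<in>A N. dcomp t n (N-n) (phi N a) = wmorph (phi n) (dcomp s n (N-n) [a])"
        using comm_n[OF assms(1,7) n, of "N-n"] by simp
    qed
    show "level B t n = (\<Union>k. shiftk k ` ext_morph (phi n) ` level A s n)"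
      by (rule level_eq[OF assms(1,4,5,6) _ _ _ c]) (use f o n in auto)
  qed
qed

end
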